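(* Let $\beta=(\pi_\ell)_{\ell=1}^L$, $\pi_\ell=(a_\ell,b_\ell,c_\ell,d_\ell)$, be a chainable architecture with $L\ge 2$. Then $\mathcal{B}^\beta\subseteq\Sigma^{\pi_1*\cdots*\pi_L}$, and $$\pi_1*\cdots*\pi_L=\Big(a_1,\ \frac{b_1d_1}{d_L},\ \frac{a_Lc_L}{a_1},\ d_L\Big).$$
   Context: A pattern is a tuple $\pi=(a,b,c,d)$ of positive integers; $\mathbf{S}_\pi:=\mathbf{I}_a\otimes\mathbf{1}_{b\times c}\otimes\mathbf{I}_d\in\{0,1\}^{abd\times acd}$. A $\pi$-factor is a complex $abd\times acd$ matrix with support contained in that of $\mathbf{S}_\pi$; $\Sigma^\pi$ is the set of $\pi$-factors. Patterns $\pi=(a,b,c,d),\pi'=(a',b',c',d')$ are chainable if $ac/a'=b'd'/d$ is an integer, $a\mid a'$, $d'\mid d$; then $\pi*\pi':=(a,bd/d',a'c'/a,d')$. An architecture $\beta=(\pi_\ell)_{\ell=1}^L$ is a sequence of patterns with $a_\ell c_\ell d_\ell=a_{\ell+1}b_{\ell+1}d_{\ell+1}$; it is chainable if every consecutive pair is chainable. $\pi_1*\cdots*\pi_L$ denotes the iterated product $((\pi_1*\pi_2)*\cdots)*\pi_L$. $\mathcal{B}^\beta:=\{\mathbf{X}_1\cdots\mathbf{X}_L:\mathbf{X}_\ell\in\Sigma^{\pi_\ell}\}$. *)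

theory Defs
  imports Complex_Main "Jordan_Normal_Form.Matrix"
begin

type_synonym pattern = "nat \<times> nat \<times> nat \<times> nat"

definition is_pattern :: "pattern \<Rightarrow> bool" where
  "is_pattern \<pi> \<longleftrightarrow> (case \<pi> of (a,b,c,d) \<Rightarrow> 0 < a \<and> 0 < b \<and> 0 < c \<and> 0 < d)"

text \<open>S_pi = I_a (x) 1_{b x c} (x) I_d, written out entrywise (0-based indices,
  row i = (i1*b+i2)*d+i3, column j = (j1*c+j2)*d+j3, entry 1 iff i1=j1 and i3=j3).\<close>
fun S_pat :: "pattern \<Rightarrow> complex mat" where
  "S_pat (a,b,c,d) = mat (a*b*d) (a*c*d)
     (\<lambda>(i,j). if i div (b*d) = j div (c*d) \<and> i mod d = j mod d then 1 else 0)"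

fun Sigma_pat :: "pattern \<Rightarrow> complex mat set" where
  "Sigma_pat (a,b,c,d) = {X. dim_row X = a*b*d \<and> dim_col X = a*c*d \<and>
     (\<forall>i<a*b*d. \<forall>j<a*c*d. S_pat (a,b,c,d) $$ (i,j) = 0 \<longrightarrow> X $$ (i,j) = 0)}"

text \<open>Chainability of two patterns: ac/a' = b'd'/d (as rationals, i.e. a c d = a' b' d'),
  this number is an integer (a' divides ac), a | a', d' | d.\<close>
fun chainable_pair :: "pattern \<Rightarrow> pattern \<Rightarrow> bool" where
  "chainable_pair (a,b,c,d) (a',b',c',d') \<longleftrightarrow>
     a*c*d = a'*b'*d' \<and> a' dvd a*c \<and> a dvd a' \<and> d' dvd d"

text \<open>Product of chainable patterns (divisions are exact for chainable pairs).\<close>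
fun pstar :: "pattern \<Rightarrow> pattern \<Rightarrow> pattern" where
  "pstar (a,b,c,d) (a',b',c',d') = (a, b*d div d', a'*c' div a, d')"

fun pat_in :: "pattern \<Rightarrow> nat" where "pat_in (a,b,c,d) = a*b*d"
fun pat_out :: "pattern \<Rightarrow> nat" where "pat_out (a,b,c,d) = a*c*d"

definition architecture :: "pattern list \<Rightarrow> bool" where
  "architecture \<beta> \<longleftrightarrow> (\<forall>\<pi>\<in>set \<beta>. is_pattern \<pi>) \<and>
     (\<forall>l. Suc l < length \<beta> \<longrightarrow> pat_out (\<beta>!l) = pat_in (\<beta>!Suc l))"

definition chainable_arch :: "pattern list \<Rightarrow> bool" where
  "chainable_arch \<beta> \<longleftrightarrow> (\<forall>l. Suc l < length \<beta> \<longrightarrow> chainable_pair (\<beta>!l) (\<beta>!Suc l))"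

definition pstar_all :: "pattern list \<Rightarrow> pattern" where
  "pstar_all \<beta> = foldl pstar (hd \<beta>) (tl \<beta>)"

definition B_arch :: "pattern list \<Rightarrow> complex mat set" where
  "B_arch \<beta> = {foldl (*) (hd Xs) (tl Xs) | Xs.
     length Xs = length \<beta> \<and> (\<forall>l<length \<beta>. Xs!l \<in> Sigma_pat (\<beta>!l))}"

end

theory Submission imports Defs begin

lemma arith_div:
  fixes i j k a b c d a' b' c' d' s :: nat
  assumes "a' = a*s" "a>0" "a*c*d = a'*b'*d'"
    and "k div (c*d) = i div (b*d)" "k div (b'*d') = j div (c'*d')"
  shows "j div ((a'*c' div a)*d') = i div (b*d)"
proof -
  have cd: "c*d = b'*d'*s" using assms(1,2,3) by (simp add: algebra_simps)
  have "a'*c' div a = s*c'" using assms(1,2) by simp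
  hence "j div ((a'*c' div a)*d') = j div (c'*d') div s"
    by (simp add: div_mult2_eq mult.commute mult.left_commute)
  also have "\<dots> = k div (b'*d') div s" using assms(5) by simp
  also have "\<dots> = k div (c*d)" by (simp add: cd div_mult2_eq)
  finally show ?thesis using assms(4) by simp
qed

lemma mult_sigma:
  assumes X: "X \<in> Sigma_pat (a,b,c,d)" and Y: "Y \<in> Sigma_pat (a',b',c',d')"
    and ch: "chainable_pair (a,b,c,d) (a',b',c',d')"
    and pos: "a>0" "d'>0"
  shows "X * Y \<in> Sigma_pat (pstar (a,b,c,d) (a',b',c',d'))"
proof -
  from ch have e: "a*c*d = a'*b'*d'" and "a dvd a'" "d' dvd d" by auto
  then obtain s t where s: "a' = a*s" and t: "d = d'*t" by (auto elim!: dvdE)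
  have r: "a*(b*d div d')*d' = a*b*d" using t pos by simp
  have cc: "a*(a'*c' div a)*d' = a'*c'*d'" using s pos by simp
  have dX: "dim_row X = a*b*d" "dim_col X = a*c*d" using X by auto
  have dY: "dim_row Y = a'*b'*d'" "dim_col Y = a'*c'*d'" using Y by auto
  have zX: "\<And>i k. i<a*b*d \<Longrightarrow> k<a*c*d \<Longrightarrow> X $$ (i,k) \<noteq> 0 \<Longrightarrow>
     i div (b*d) = k div (c*d) \<and> i mod d = k mod d"
    using X by (auto split: if_splits)
  have zY: "\<And>k j. k<a'*b'*d' \<Longrightarrow> j<a'*c'*d' \<Longrightarrow> Y $$ (k,j) \<noteq> 0 \<Longrightarrow>
     k div (b'*d') = j div (c'*d') \<and> k mod d' = j mod d'"
    using Y by (auto split: if_splits)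
  show ?thesis
  proof (simp only: pstar.simps Sigma_pat.simps, intro CollectI conjI allI impI)
    show "dim_row (X*Y) = a*(b*d div d')*d'" using r dX by (metis r dX(1) index_mult_mat(2))
    show "dim_col (X*Y) = a*(a'*c' div a)*d'" using cc dY by (metis cc dY(2) index_mult_mat(3))
    fix i j assume i: "i < a*(b*d div d')*d'" and j: "j < a*(a'*c' div a)*d'"
      and S: "S_pat (a, b*d div d', a'*c' div a, d') $$ (i,j) = 0"
    have i': "i < a*b*d" using i r by simp
    have j': "j < a'*c'*d'" using j cc by simp
    have Sn: "\<not> (i div ((b*d div d')*d') = j div ((a'*c' div a)*d') \<and> i mod d' = j mod d')"
      using S i j by (auto simp: mult.assoc split: if_splits)
    have bd: "(b*d div d')*d' = b*d" using t pos by simp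
    have term0: "X $$ (i,k) * Y $$ (k,j) = 0" if k: "k < a*c*d" for k
    proof (rule ccontr)
      assume "X $$ (i,k) * Y $$ (k,j) \<noteq> 0"
      hence nx: "X $$ (i,k) \<noteq> 0" and ny: "Y $$ (k,j) \<noteq> 0" by auto
      have k2: "k < a'*b'*d'" using k e by simp
      from zX[OF i' k nx] have h1: "i div (b*d) = k div (c*d)" "i mod d = k mod d" by auto
      from zY[OF k2 j' ny] have h2: "k div (b'*d') = j div (c'*d')" "k mod d' = j mod d'" by auto
      have m: "i mod d' = j mod d'"
      proof -
        have "i mod d' = i mod d mod d'" using t by (simp add: mod_mod_cancel)
        also have "\<dots> = k mod d mod d'" using h1 by simp
        also have "\<dots> = k mod d'" using t by (simp add: mod_mod_cancel)
        finally show ?thesis using h2 by simp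
      qed
      have "j div ((a'*c' div a)*d') = i div (b*d)"
        using arith_div[OF s pos(1) e h1(1)[symmetric] h2(1)] .
      thus False using Sn m bd by simp
    qed
    have "(X*Y) $$ (i,j) = row X i \<bullet> col Y j"
      using i' j' dX dY by simp
    also have "\<dots> = (\<Sum>k<a*c*d. X $$ (i,k) * Y $$ (k,j))"
      using i' j' dX dY e unfolding scalar_prod_def
      by (auto intro!: sum.cong simp: lessThan_atLeast0)
    also have "\<dots> = 0" using term0 by (intro sum.neutral) simp
    finally show "(X*Y) $$ (i,j) = 0" .
  qed
qed


lemma main_ind:
  fixes \<beta> :: "pattern list" and Xs :: "complex mat list"
  assumes arch: "architecture \<beta>" and ch: "chainable_arch \<beta>"
    and b0: "\<beta> ! 0 = (a1, b1, c1, d1)"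
    and lx: "length Xs = length \<beta>" and xs: "\<forall>l<length \<beta>. Xs!l \<in> Sigma_pat (\<beta>!l)"
  shows "m < length \<beta> \<Longrightarrow> (case \<beta>!m of (a,b,c,d) \<Rightarrow>
      foldl pstar (\<beta>!0) (take m (tl \<beta>)) = (a1, b1*d1 div d, a*c div a1, d) \<and> a1 dvd a \<and> d dvd d1)
     \<and> foldl (*) (Xs!0) (take m (tl Xs)) \<in> Sigma_pat (foldl pstar (\<beta>!0) (take m (tl \<beta>)))"
proof (induction m)
  have pos: "\<And>l a b c d. l < length \<beta> \<Longrightarrow> \<beta>!l = (a,b,c,d) \<Longrightarrow> a>0 \<and> b>0 \<and> c>0 \<and> d>0"
    using arch unfolding architecture_def is_pattern_def by (metis case_prod_conv nth_mem)
  {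
  case 0
  then have "a1>0" "d1>0" using pos[OF _ b0] by auto
  moreover have "Xs!0 \<in> Sigma_pat (\<beta>!0)" using xs 0 by simp
  ultimately show ?case using b0 by (simp del: Sigma_pat.simps)
  }
  case (Suc m)
  then have m: "m < length \<beta>" by simp
  obtain a b c d where bm: "\<beta>!m = (a,b,c,d)" by (cases "\<beta>!m") auto
  obtain a' b' c' d' where bs: "\<beta>!Suc m = (a',b',c',d')" by (cases "\<beta>!Suc m") auto
  from Suc.IH[OF m] bm have IH: "foldl pstar (\<beta>!0) (take m (tl \<beta>)) = (a1, b1*d1 div d, a*c div a1, d)"
     "a1 dvd a" "d dvd d1" "foldl (*) (Xs!0) (take m (tl Xs)) \<in> Sigma_pat (a1, b1*d1 div d, a*c div a1, d)"
    by auto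
  have p1: "a1>0" using pos[OF _ b0] Suc.prems by fastforce
  have p2: "d'>0" using pos[OF Suc.prems bs] by auto
  have ar: "a*c*d = a'*b'*d'" using arch Suc.prems bm bs unfolding architecture_def by force
  have cp: "a' dvd a*c" "a dvd a'" "d' dvd d" using ch Suc.prems bm bs unfolding chainable_arch_def by force+
  have ac: "a1*(a*c div a1) = a*c" using IH(2) by (simp add: dvd_mult2)
  have chp: "chainable_pair (a1, b1*d1 div d, a*c div a1, d) (a',b',c',d')"
    using ar cp ac IH(2) dvd_trans by auto
  have tb: "take (Suc m) (tl \<beta>) = take m (tl \<beta>) @ [\<beta>!Suc m]"
    using Suc.prems by (simp add: take_Suc_conv_app_nth nth_tl)
  have tx: "take (Suc m) (tl Xs) = take m (tl Xs) @ [Xs!Suc m]"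
    using Suc.prems lx by (simp add: take_Suc_conv_app_nth nth_tl)
  have dd: "(b1*d1 div d)*d = b1*d1" using IH(3) by (simp add: dvd_mult2)
  have eq: "foldl pstar (\<beta>!0) (take (Suc m) (tl \<beta>)) = (a1, b1*d1 div d', a'*c' div a1, d')"
    using tb IH(1) bs dd by simp
  have X: "Xs!Suc m \<in> Sigma_pat (a',b',c',d')" using xs Suc.prems bs by metis
  have "foldl (*) (Xs!0) (take (Suc m) (tl Xs)) \<in> Sigma_pat (foldl pstar (\<beta>!0) (take (Suc m) (tl \<beta>)))"
    using mult_sigma[OF IH(4) X chp p1 p2] tx tb IH(1) bs by (simp del: Sigma_pat.simps)
  then show ?case using eq bs IH(2,3) cp dvd_trans by auto
qed

theorem lemma4p9:
  fixes \<beta> :: "pattern list" and a1 b1 c1 d1 aL bL cL dL :: nat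
  assumes "architecture \<beta>" and "chainable_arch \<beta>" and "length \<beta> \<ge> 2"
    and "\<beta> ! 0 = (a1, b1, c1, d1)" and "last \<beta> = (aL, bL, cL, dL)"
  shows "B_arch \<beta> \<subseteq> Sigma_pat (pstar_all \<beta>) \<and>
         pstar_all \<beta> = (a1, b1 * d1 div dL, aL * cL div a1, dL)"
proof -
  let ?m = "length \<beta> - 1"
  have ne: "\<beta> \<noteq> []" using assms(3) by auto
  have m: "?m < length \<beta>" using assms(3) by simp
  have lst: "\<beta> ! ?m = (aL, bL, cL, dL)" using assms(5) ne by (simp add: last_conv_nth)
  have pa: "pstar_all \<beta> = foldl pstar (\<beta>!0) (take ?m (tl \<beta>))"
    using ne by (simp add: pstar_all_def hd_conv_nth)
  have ex: "\<exists>Xs. length Xs = length \<beta> \<and> (\<forall>l<length \<beta>. Xs!l \<in> Sigma_pat (\<beta>!l))"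
  proof (rule exI[of _ "map (\<lambda>p. case p of (a,b,c,d) \<Rightarrow> 0\<^sub>m (a*b*d) (a*c*d)) \<beta>"], intro conjI allI impI)
    fix l assume l: "l < length \<beta>"
    obtain a b c d where "\<beta>!l = (a,b,c,d)" by (cases "\<beta>!l") auto
    then show "map (\<lambda>p. case p of (a,b,c,d) \<Rightarrow> 0\<^sub>m (a*b*d) (a*c*d)) \<beta> ! l \<in> Sigma_pat (\<beta>!l)"
      using l by simp
  qed simp
  then obtain Xs where Xs: "length Xs = length \<beta>" "\<forall>l<length \<beta>. Xs!l \<in> Sigma_pat (\<beta>!l)" by blast
  have eq: "pstar_all \<beta> = (a1, b1 * d1 div dL, aL * cL div a1, dL)"
    using main_ind[OF assms(1,2,4) Xs m] lst pa by simp
  have "B_arch \<beta> \<subseteq> Sigma_pat (pstar_all \<beta>)"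
  proof
    fix Y assume "Y \<in> B_arch \<beta>"
    then obtain Ys where Ys: "Y = foldl (*) (hd Ys) (tl Ys)" "length Ys = length \<beta>"
      "\<forall>l<length \<beta>. Ys!l \<in> Sigma_pat (\<beta>!l)" unfolding B_arch_def by blast
    have "Ys \<noteq> []" using Ys(2) ne by auto
    then have "Y = foldl (*) (Ys!0) (take ?m (tl Ys))" using Ys(1,2) by (simp add: hd_conv_nth)
    then show "Y \<in> Sigma_pat (pstar_all \<beta>)"
      using main_ind[OF assms(1,2,4) Ys(2,3) m] pa by simp
  qed
  with eq show ?thesis by simp
qed

end
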